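(* Let $b(r)$ be a smooth positive function on an open interval of $r>0$ and consider the metric $ds^2=-b^2dt^2+b^{-2}dr^2+r^2(d\theta^2+\sin^2\theta\,d\phi^2)$. Let $\kappa_1,\kappa_2,q$ be constants, set $\Lambda=-\kappa_1$, $\lambda=-\kappa_2$, and let $$K_{kl}=\kappa_2r^2\,u_ku_l+(\kappa_1+2\kappa_2r^2)g_{kl}-\kappa_2r^2\,\chi_k\chi_l,\qquad T_{kl}=\frac{q^2}{r^4}\left(2u_ku_l-2\chi_k\chi_l+g_{kl}\right).$$ Then the conformal Killing gravity field equations $R_{kl}-\tfrac12Rg_{kl}=T_{kl}+K_{kl}$ hold if and only if there is a constant $M$ such that $$b^2(r)=1-\frac{2M}{r}-\frac{\Lambda}{3}r^2+\frac{q^2}{r^2}-\frac{\lambda}{5}r^4 .$$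
   Context: $u_k$ is the unit timelike covector with components $u_0=-b$ and all others zero; $\chi_k$ is the unit radial covector with $\chi_r=1/b$ and all others zero. $R_{kl}$ is the Ricci tensor and $R$ the scalar curvature. $T_{kl}$ is the stress-energy tensor of linear electrodynamics (Lagrangian $\mathscr L(F)=F$) with Coulomb electric field $\mathbb E=q_e/r^2$ and monopole magnetic field $\mathbb B=q_m/r^2$, $q^2=q_e^2+q_m^2$, i.e. $T_{kl}=2(\mathbb E^2+\mathbb B^2)(u_ku_l-\chi_k\chi_l)+(\mathbb E^2+\mathbb B^2)g_{kl}$. $K_{kl}$ is the divergence-free conformal Killing tensor $\mathsf Au_ku_l+\mathsf Bg_{kl}+\mathsf C\chi_k\chi_l$ with $\mathsf A=\kappa_2 r^2-2\kappa_3b^2$, $\mathsf B=\kappa_1+2\kappa_2r^2+\kappa_3b^2$, $\mathsf C=-\kappa_2r^2$, specialized to $\kappa_3=0$ (the case $h=bf_1=1$). *)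

theory Defs
  imports "HOL-Analysis.Analysis"
begin

text \<open>Coordinates on spacetime: x$0 = t, x$1 = r, x$2 = theta, x$3 = phi.
  A metric is a matrix-valued function of the coordinates.\<close>

type_synonym pt = "real^4"
type_synonym metric = "pt \<Rightarrow> real^4^4"

definition pd :: "4 \<Rightarrow> (pt \<Rightarrow> real) \<Rightarrow> pt \<Rightarrow> real" where
  "pd i F x = deriv (\<lambda>s. F (x + s *\<^sub>R axis i 1)) 0"

definition ginv :: "metric \<Rightarrow> pt \<Rightarrow> 4 \<Rightarrow> 4 \<Rightarrow> real" where
  "ginv g x i j = matrix_inv (g x) $ i $ j"

definition christoffel :: "metric \<Rightarrow> pt \<Rightarrow> 4 \<Rightarrow> 4 \<Rightarrow> 4 \<Rightarrow> real" where
  "christoffel g x k i j = (1/2) * (\<Sum>l\<in>UNIV. ginv g x k l *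
      (pd i (\<lambda>y. g y $ l $ j) x + pd j (\<lambda>y. g y $ l $ i) x - pd l (\<lambda>y. g y $ i $ j) x))"

definition ricci :: "metric \<Rightarrow> pt \<Rightarrow> 4 \<Rightarrow> 4 \<Rightarrow> real" where
  "ricci g x i j =
     (\<Sum>k\<in>UNIV. pd k (\<lambda>y. christoffel g y k i j) x - pd j (\<lambda>y. christoffel g y k i k) x)
   + (\<Sum>k\<in>UNIV. \<Sum>l\<in>UNIV. christoffel g x k k l * christoffel g x l i j
                          - christoffel g x k j l * christoffel g x l i k)"

definition scalar_curv :: "metric \<Rightarrow> pt \<Rightarrow> real" where
  "scalar_curv g x = (\<Sum>i\<in>UNIV. \<Sum>j\<in>UNIV. ginv g x i j * ricci g x i j)"

definition sss_metric :: "(real \<Rightarrow> real) \<Rightarrow> metric" where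
  "sss_metric b x = (\<chi> i j. if i \<noteq> j then 0
      else if i = 0 then - (b (x$1))\<^sup>2
      else if i = 1 then 1 / (b (x$1))\<^sup>2
      else if i = 2 then (x$1)\<^sup>2
      else (x$1)\<^sup>2 * (sin (x$2))\<^sup>2)"

text \<open>Unit timelike covector u (u_0 = -b) and unit radial covector chi (chi_r = 1/b).\<close>
definition ucov :: "(real \<Rightarrow> real) \<Rightarrow> pt \<Rightarrow> 4 \<Rightarrow> real" where
  "ucov b x k = (if k = 0 then - b (x$1) else 0)"

definition chicov :: "(real \<Rightarrow> real) \<Rightarrow> pt \<Rightarrow> 4 \<Rightarrow> real" where
  "chicov b x k = (if k = 1 then 1 / b (x$1) else 0)"

definition Ktens :: "real \<Rightarrow> real \<Rightarrow> (real \<Rightarrow> real) \<Rightarrow> pt \<Rightarrow> 4 \<Rightarrow> 4 \<Rightarrow> real" where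
  "Ktens \<kappa>1 \<kappa>2 b x k l =
     \<kappa>2 * (x$1)\<^sup>2 * ucov b x k * ucov b x l
   + (\<kappa>1 + 2 * \<kappa>2 * (x$1)\<^sup>2) * sss_metric b x $ k $ l
   - \<kappa>2 * (x$1)\<^sup>2 * chicov b x k * chicov b x l"

definition Ttens :: "real \<Rightarrow> (real \<Rightarrow> real) \<Rightarrow> pt \<Rightarrow> 4 \<Rightarrow> 4 \<Rightarrow> real" where
  "Ttens q b x k l = q\<^sup>2 / (x$1) ^ 4 *
     (2 * ucov b x k * ucov b x l - 2 * chicov b x k * chicov b x l + sss_metric b x $ k $ l)"

end

theory Submission
  imports Defs
begin



lemma pd_local:
  fixes F :: "pt \<Rightarrow> real" and H :: "real \<Rightarrow> real \<Rightarrow> real"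
  assumes U: "open U" "x \<in> U" and FH: "\<And>z. z \<in> U \<Longrightarrow> F z = H (z$1) (z$2)"
   and Dr: "((\<lambda>r. H r (x$2)) has_real_derivative Dr) (at (x$1))"
   and Dt: "((\<lambda>t. H (x$1) t) has_real_derivative Dt) (at (x$2))"
  shows "pd i F x = (if i = 1 then Dr else if i = 2 then Dt else 0)"
proof -
  have op: "open ((\<lambda>s::real. x + s *\<^sub>R axis i 1) -` U)"
    by (rule continuous_open_vimage[OF U(1)]) (intro continuous_intros)
  have "\<forall>\<^sub>F s in nhds 0. F (x + s *\<^sub>R axis i 1) = H (x$1 + (if i = 1 then s else 0)) (x$2 + (if i = 2 then s else 0))"
    unfolding eventually_nhds
    apply (rule exI[of _ "(\<lambda>s::real. x + s *\<^sub>R axis i 1) -` U"])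
    using op U(2) by (auto simp: FH axis_def)
  then have e: "pd i F x = deriv (\<lambda>s. H (x$1 + (if i = 1 then s else 0)) (x$2 + (if i = 2 then s else 0))) 0"
    unfolding pd_def by (rule deriv_cong_ev) simp
  have "((\<lambda>s. H (x$1 + (if i = 1 then s else 0)) (x$2 + (if i = 2 then s else 0))) has_real_derivative (if i = 1 then Dr else if i = 2 then Dt else 0)) (at 0)"
  proof (cases "i = 1")
    case True
    have "((\<lambda>s. H (x$1 + s) (x$2)) has_real_derivative Dr * 1) (at 0)"
      by (rule DERIV_chain2[where f="\<lambda>r. H r (x$2)"]) (use Dr in simp, auto intro!: derivative_eq_intros)
    then show ?thesis using True by simp
  next
    case False
    show ?thesis
    proof (cases "i = 2")
      case True
      have "((\<lambda>s. H (x$1) (x$2 + s)) has_real_derivative Dt * 1) (at 0)"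
        by (rule DERIV_chain2[where f="\<lambda>t. H (x$1) t"]) (use Dt in simp, auto intro!: derivative_eq_intros)
      then show ?thesis using True False by simp
    qed (use False in simp)
  qed
  then show ?thesis unfolding e by (rule DERIV_imp_deriv)
qed




lemma diag_mult:
  "((\<chi> i j. if i = j then d i else 0) :: real^'n^'n) ** (\<chi> i j. if i = j then e i else 0)
   = (\<chi> i j. if i = j then d i * e i else 0)"
proof -
  have *: "\<And>i j k. (if i = k then d i else 0) * (if k = j then e k else 0) = (if k = i then (if i = j then d i * e i else 0) else (0::real))"
    by auto
  show ?thesis by (simp add: matrix_matrix_mult_def vec_eq_iff * )
qed

lemma diag_inv:
  assumes "\<And>i. d i \<noteq> 0"
  shows "matrix_inv ((\<chi> i j. if i = j then d i else 0) :: real^'n^'n) = (\<chi> i j. if i = j then 1 / d i else 0)"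
proof -
  let ?A = "((\<chi> i j. if i = j then d i else 0) :: real^'n^'n)"
  let ?B = "((\<chi> i j. if i = j then 1 / d i else 0) :: real^'n^'n)"
  have AB: "?A ** ?B = mat 1" and BA: "?B ** ?A = mat 1"
    by (simp_all add: diag_mult assms mat_def vec_eq_iff)
  have "?A ** matrix_inv ?A = mat 1 \<and> matrix_inv ?A ** ?A = mat 1"
    unfolding matrix_inv_def by (rule someI[of _ ?B]) (use AB BA in simp)
  then have "matrix_inv ?A = matrix_inv ?A ** (?A ** ?B)" using AB by simp
  also have "\<dots> = ?B" by (simp add: matrix_mul_assoc \<open>_ \<and> _\<close>)
  finally show ?thesis .
qed




definition Gd :: "(real\<Rightarrow>real) \<Rightarrow> 4 \<Rightarrow> real \<Rightarrow> real \<Rightarrow> real" where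
 "Gd b i r t = (if i = 0 then -((b r)^2) else if i = 1 then 1/(b r)^2 else if i = 2 then r^2 else r^2 * (sin t)^2)"

definition dGr :: "(real\<Rightarrow>real) \<Rightarrow> 4 \<Rightarrow> real \<Rightarrow> real \<Rightarrow> real" where
 "dGr b i r t = (if i = 0 then -(2 * b r * deriv b r) else if i = 1 then -(2 * deriv b r / (b r)^3)
    else if i = 2 then 2*r else 2*r*(sin t)^2)"

definition dGt :: "(real\<Rightarrow>real) \<Rightarrow> 4 \<Rightarrow> real \<Rightarrow> real \<Rightarrow> real" where
 "dGt b i r t = (if i = 3 then 2 * r^2 * sin t * cos t else 0)"

lemma sss_diag: "sss_metric b x = (\<chi> i j. if i = j then Gd b i (x$1) (x$2) else 0)"
  by (simp add: sss_metric_def Gd_def vec_eq_iff)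

lemma ginv_eq:
  assumes "b (x$1) \<noteq> 0" "x$1 \<noteq> 0" "sin (x$2) \<noteq> 0"
  shows "ginv (sss_metric b) x k l = (if k = l then 1 / Gd b k (x$1) (x$2) else 0)"
proof -
  have "\<And>i. Gd b i (x$1) (x$2) \<noteq> 0" using assms by (simp add: Gd_def)
  then show ?thesis unfolding ginv_def sss_diag by (simp add: diag_inv)
qed

lemma pd_metric:
  assumes "(b has_real_derivative deriv b (x$1)) (at (x$1))" "b (x$1) \<noteq> 0"
  shows "pd m (\<lambda>z. sss_metric b z $ l $ j) x =
    (if l = j then (if m = 1 then dGr b l (x$1) (x$2) else if m = 2 then dGt b l (x$1) (x$2) else 0) else 0)"
proof -
  have *: "pd m (\<lambda>z. sss_metric b z $ l $ j) x = (if m = 1 then (if l = j then dGr b l (x$1) (x$2) else 0)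
     else if m = 2 then (if l = j then dGt b l (x$1) (x$2) else 0) else 0)"
  proof (rule pd_local[where U=UNIV and H="\<lambda>r t. if l = j then Gd b l r t else 0"])
    show "((\<lambda>r. if l = j then Gd b l r (x $ 2) else 0) has_real_derivative (if l = j then dGr b l (x$1) (x$2) else 0)) (at (x $ 1))"
      using exhaust_4[of l] assms
      by (auto simp: Gd_def dGr_def intro!: derivative_eq_intros simp: power2_eq_square power3_eq_cube field_simps)
    show "((\<lambda>t. if l = j then Gd b l (x$1) t else 0) has_real_derivative (if l = j then dGt b l (x$1) (x$2) else 0)) (at (x $ 2))"
      using exhaust_4[of l] assms
      by (auto simp: Gd_def dGt_def intro!: derivative_eq_intros simp: power2_eq_square)
  qed (auto simp: sss_diag)
  then show ?thesis by auto
qed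




definition Chr :: "(real\<Rightarrow>real) \<Rightarrow> 4 \<Rightarrow> 4 \<Rightarrow> 4 \<Rightarrow> real \<Rightarrow> real \<Rightarrow> real" where
 "Chr b k i j r t =
   (if k = 0 \<and> (i = 0 \<and> j = 1 \<or> i = 1 \<and> j = 0) then deriv b r / b r
    else if k = 1 \<and> i = 0 \<and> j = 0 then (b r)^3 * deriv b r
    else if k = 1 \<and> i = 1 \<and> j = 1 then - (deriv b r / b r)
    else if k = 1 \<and> i = 2 \<and> j = 2 then - (r * (b r)^2)
    else if k = 1 \<and> i = 3 \<and> j = 3 then - (r * (b r)^2 * (sin t)^2)
    else if k = 2 \<and> (i = 1 \<and> j = 2 \<or> i = 2 \<and> j = 1) then 1 / r
    else if k = 2 \<and> i = 3 \<and> j = 3 then - (sin t * cos t)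
    else if k = 3 \<and> (i = 1 \<and> j = 3 \<or> i = 3 \<and> j = 1) then 1 / r
    else if k = 3 \<and> (i = 2 \<and> j = 3 \<or> i = 3 \<and> j = 2) then cos t / sin t
    else 0)"

lemma chr_eq:
  assumes "(b has_real_derivative deriv b (x$1)) (at (x$1))" "b (x$1) \<noteq> 0" "x$1 \<noteq> 0" "sin (x$2) \<noteq> 0"
  shows "christoffel (sss_metric b) x k i j = Chr b k i j (x$1) (x$2)"
proof -
  have "christoffel (sss_metric b) x k i j = (1/2) * (\<Sum>l\<in>UNIV. (if k = l then 1 / Gd b k (x$1) (x$2) else 0) *
      ((if l = j then (if i = 1 then dGr b l (x$1) (x$2) else if i = 2 then dGt b l (x$1) (x$2) else 0) else 0)
     + (if l = i then (if j = 1 then dGr b l (x$1) (x$2) else if j = 2 then dGt b l (x$1) (x$2) else 0) else 0)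
     - (if i = j then (if l = 1 then dGr b i (x$1) (x$2) else if l = 2 then dGt b i (x$1) (x$2) else 0) else 0)))"
    unfolding christoffel_def using assms by (simp add: ginv_eq pd_metric)
  also have "\<dots> = (1/2) * (1 / Gd b k (x$1) (x$2)) *
      ((if k = j then (if i = 1 then dGr b k (x$1) (x$2) else if i = 2 then dGt b k (x$1) (x$2) else 0) else 0)
     + (if k = i then (if j = 1 then dGr b k (x$1) (x$2) else if j = 2 then dGt b k (x$1) (x$2) else 0) else 0)
     - (if i = j then (if k = 1 then dGr b i (x$1) (x$2) else if k = 2 then dGt b i (x$1) (x$2) else 0) else 0))"
    by (simp add: if_distrib[of "\<lambda>u. u * _"] sum.delta cong: if_cong)
  also have "\<dots> = Chr b k i j (x$1) (x$2)"
    using exhaust_4[of k] exhaust_4[of i] exhaust_4[of j] assms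
    apply (elim disjE)
    apply (simp_all add: Chr_def Gd_def dGr_def dGt_def)
    apply (simp_all add: field_simps power2_eq_square power3_eq_cube)
    done
  finally show ?thesis .
qed




definition dCr :: "(real\<Rightarrow>real) \<Rightarrow> 4 \<Rightarrow> 4 \<Rightarrow> 4 \<Rightarrow> real \<Rightarrow> real \<Rightarrow> real" where
 "dCr b k i j r t =
   (if k = 0 \<and> (i = 0 \<and> j = 1 \<or> i = 1 \<and> j = 0) then (deriv (deriv b) r * b r - (deriv b r)^2) / (b r)^2
    else if k = 1 \<and> i = 0 \<and> j = 0 then 3 * (b r)^2 * (deriv b r)^2 + (b r)^3 * deriv (deriv b) r
    else if k = 1 \<and> i = 1 \<and> j = 1 then - ((deriv (deriv b) r * b r - (deriv b r)^2) / (b r)^2)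
    else if k = 1 \<and> i = 2 \<and> j = 2 then - ((b r)^2 + 2 * r * b r * deriv b r)
    else if k = 1 \<and> i = 3 \<and> j = 3 then - (((b r)^2 + 2 * r * b r * deriv b r) * (sin t)^2)
    else if k = 2 \<and> (i = 1 \<and> j = 2 \<or> i = 2 \<and> j = 1) then - (1 / r^2)
    else if k = 2 \<and> i = 3 \<and> j = 3 then 0
    else if k = 3 \<and> (i = 1 \<and> j = 3 \<or> i = 3 \<and> j = 1) then - (1 / r^2)
    else 0)"

definition dCt :: "(real\<Rightarrow>real) \<Rightarrow> 4 \<Rightarrow> 4 \<Rightarrow> 4 \<Rightarrow> real \<Rightarrow> real \<Rightarrow> real" where
 "dCt b k i j r t =
   (if k = 1 \<and> i = 3 \<and> j = 3 then - (2 * r * (b r)^2 * sin t * cos t)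
    else if k = 2 \<and> i = 3 \<and> j = 3 then - ((cos t)^2 - (sin t)^2)
    else if k = 3 \<and> (i = 2 \<and> j = 3 \<or> i = 3 \<and> j = 2) then - (1 / (sin t)^2)
    else 0)"

lemma chr_dr:
  assumes d1: "(b has_real_derivative deriv b r) (at r)"
    and d2: "(deriv b has_real_derivative deriv (deriv b) r) (at r)" and "b r \<noteq> 0" "r \<noteq> 0"
  shows "((\<lambda>r. Chr b k i j r t) has_real_derivative dCr b k i j r t) (at r)"
  using exhaust_4[of k] exhaust_4[of i] exhaust_4[of j] assms
  apply (elim disjE)
  apply (simp_all add: Chr_def dCr_def)
  apply (auto intro!: derivative_eq_intros d1 d2 simp: field_simps power2_eq_square power3_eq_cube)
  done

lemma cc: "cos t * (cos t * x) = x - sin t * (sin t * (x::real))"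
proof -
  have "cos t * cos t = 1 - sin t * sin t" using sin_cos_squared_add3[of t] by linarith
  then show ?thesis by (metis mult.assoc left_diff_distrib mult_1)
qed

lemma chr_dt:
  assumes "sin t \<noteq> 0"
  shows "((\<lambda>t. Chr b k i j r t) has_real_derivative dCt b k i j r t) (at t)"
  using exhaust_4[of k] exhaust_4[of i] exhaust_4[of j] assms
  apply (elim disjE)
  apply (simp_all add: Chr_def dCt_def)
  apply (auto intro!: derivative_eq_intros simp: field_simps power2_eq_square power3_eq_cube)
  apply (simp_all add: cc)
  done




definition Rx :: "(real\<Rightarrow>real) \<Rightarrow> 4 \<Rightarrow> 4 \<Rightarrow> real \<Rightarrow> real \<Rightarrow> real" where
 "Rx b i j r t = (if i \<noteq> j then 0
    else if i = 0 then (b r)^2 * ((deriv b r)^2 + b r * deriv (deriv b) r + 2 * b r * deriv b r / r)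
    else if i = 1 then - (((deriv b r)^2 + b r * deriv (deriv b) r + 2 * b r * deriv b r / r) / (b r)^2)
    else if i = 2 then 1 - (b r)^2 - 2 * r * b r * deriv b r
    else (sin t)^2 * (1 - (b r)^2 - 2 * r * b r * deriv b r))"

definition UU :: "real set \<Rightarrow> pt set" where
  "UU I = {z. z$1 \<in> I \<and> 0 < z$2 \<and> z$2 < pi}"

lemma open_UU: "open I \<Longrightarrow> open (UU I)"
proof -
  assume "open I"
  have "UU I = ((\<lambda>z::pt. z$1) -` I) \<inter> {z. 0 < z$2} \<inter> {z. z$2 < pi}"
    by (auto simp: UU_def)
  moreover have "open ((\<lambda>z::pt. z$1) -` I)"
    by (rule open_vimage[OF \<open>open I\<close>]) (intro continuous_intros)
  moreover have "open {z::pt. 0 < z$2}" "open {z::pt. z$2 < pi}"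
    by (auto intro!: open_Collect_less continuous_intros)
  ultimately show ?thesis by auto
qed

lemma sin_pos_UU: "x \<in> UU I \<Longrightarrow> sin (x$2) > 0"
  by (auto simp: UU_def intro!: sin_gt_zero)

locale bsetup =
  fixes b :: "real \<Rightarrow> real" and I :: "real set"
  assumes I_open: "open I" and Ipos: "\<And>r. r \<in> I \<Longrightarrow> r > 0"
    and bpos: "\<And>r. r \<in> I \<Longrightarrow> b r > 0"
    and d1: "\<And>r. r \<in> I \<Longrightarrow> (b has_real_derivative deriv b r) (at r)"
    and d2: "\<And>r. r \<in> I \<Longrightarrow> (deriv b has_real_derivative deriv (deriv b) r) (at r)"
begin

lemma chr_U: "z \<in> UU I \<Longrightarrow> christoffel (sss_metric b) z k i j = Chr b k i j (z$1) (z$2)"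
  using d1 bpos Ipos sin_pos_UU[of z I] by (intro chr_eq) (auto simp: UU_def dest: bpos Ipos)

lemma pd_chr:
  assumes "x \<in> UU I"
  shows "pd m (\<lambda>y. christoffel (sss_metric b) y k i j) x =
     (if m = 1 then dCr b k i j (x$1) (x$2) else if m = 2 then dCt b k i j (x$1) (x$2) else 0)"
proof (rule pd_local[where U="UU I" and H="Chr b k i j"])
  show "open (UU I)" using I_open by (rule open_UU)
  have x1: "x$1 \<in> I" using assms by (auto simp: UU_def)
  show "((\<lambda>r. Chr b k i j r (x $ 2)) has_real_derivative dCr b k i j (x$1) (x$2)) (at (x $ 1))"
    using x1 by (intro chr_dr d1 d2) (auto dest: bpos Ipos)
  show "((\<lambda>t. Chr b k i j (x$1) t) has_real_derivative dCt b k i j (x$1) (x$2)) (at (x $ 2))"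
    using sin_pos_UU[OF assms] by (intro chr_dt) auto
qed (use assms chr_U in auto)

lemma ricci_U:
  assumes "x \<in> UU I"
  shows "ricci (sss_metric b) x i j = Rx b i j (x$1) (x$2)"
proof -
  have x1: "x$1 \<in> I" using assms by (auto simp: UU_def)
  have nz: "b (x$1) \<noteq> 0" "x$1 \<noteq> 0" "sin (x$2) \<noteq> 0"
    using bpos[OF x1] Ipos[OF x1] sin_pos_UU[OF assms] by auto
  show ?thesis
    unfolding ricci_def pd_chr[OF assms] chr_U[OF assms]
    using exhaust_4[of i] exhaust_4[of j] nz
    apply (simp only: sum_4)
    apply (elim disjE)
    apply (simp_all add: Chr_def dCr_def dCt_def Rx_def)
    apply (simp_all add: field_simps power2_eq_square power3_eq_cube)
    done
qed

end



definition Sx :: "(real\<Rightarrow>real) \<Rightarrow> real \<Rightarrow> real" where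
 "Sx b r = -(2 * (deriv b r)^2 + 2 * b r * deriv (deriv b) r) - 8 * b r * deriv b r / r + 2 * (1 - (b r)^2) / r^2"

definition Acond where
 "Acond b q \<kappa>1 \<kappa>2 r \<longleftrightarrow> 2 * r * b r * deriv b r + (b r)^2 - 1 = - (q^2 / r^2) + \<kappa>1 * r^2 + \<kappa>2 * r^4"

definition Bcond where
 "Bcond b q \<kappa>1 \<kappa>2 r \<longleftrightarrow> r * (2 * (deriv b r)^2 + 2 * b r * deriv (deriv b) r) + 4 * b r * deriv b r
     = 2 * q^2 / r^3 + 2 * \<kappa>1 * r + 4 * \<kappa>2 * r^3"

lemma eq_scaled: "(c::real) \<noteq> 0 \<Longrightarrow> X - Y = c * (P - Q) \<Longrightarrow> (X = Y \<longleftrightarrow> P = Q)"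
  by auto

context bsetup begin

lemma scalar_U:
  assumes "x \<in> UU I"
  shows "scalar_curv (sss_metric b) x = Sx b (x$1)"
proof -
  have x1: "x$1 \<in> I" using assms by (auto simp: UU_def)
  have nz: "b (x$1) \<noteq> 0" "x$1 \<noteq> 0" "sin (x$2) \<noteq> 0"
    using bpos[OF x1] Ipos[OF x1] sin_pos_UU[OF assms] by auto
  show ?thesis
    unfolding scalar_curv_def ricci_U[OF assms] ginv_eq[of b x, OF nz]
    using nz
    apply (simp add: sum_4 Rx_def Gd_def Sx_def)
    apply (simp add: field_simps power2_eq_square power3_eq_cube)
    done
qed

lemma einstein_U:
  assumes "x \<in> UU I"
  shows "(\<forall>k l. ricci (sss_metric b) x k l
                     - 1/2 * scalar_curv (sss_metric b) x * sss_metric b x $ k $ l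
                   = Ttens q b x k l + Ktens \<kappa>1 \<kappa>2 b x k l)
     \<longleftrightarrow> Acond b q \<kappa>1 \<kappa>2 (x$1) \<and> Bcond b q \<kappa>1 \<kappa>2 (x$1)"
proof -
  have x1: "x$1 \<in> I" using assms by (auto simp: UU_def)
  define r where "r = x$1"
  define t where "t = x$2"
  have nz: "b r \<noteq> 0" "r \<noteq> 0" "sin t \<noteq> 0"
    using bpos[OF x1] Ipos[OF x1] sin_pos_UU[OF assms] by (auto simp: r_def t_def)
  let ?E = "\<lambda>k l. ricci (sss_metric b) x k l
                     - 1/2 * scalar_curv (sss_metric b) x * sss_metric b x $ k $ l
                   = Ttens q b x k l + Ktens \<kappa>1 \<kappa>2 b x k l"
  have E: "?E k l \<longleftrightarrow> Rx b k l r t - 1/2 * Sx b r * (if k = l then Gd b k r t else 0)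
     = q^2 / r^4 * (2 * (if k = 0 then - b r else 0) * (if l = 0 then - b r else 0)
         - 2 * (if k = 1 then 1 / b r else 0) * (if l = 1 then 1 / b r else 0) + (if k = l then Gd b k r t else 0))
     + (\<kappa>2 * r^2 * (if k = 0 then - b r else 0) * (if l = 0 then - b r else 0)
        + (\<kappa>1 + 2 * \<kappa>2 * r^2) * (if k = l then Gd b k r t else 0)
        - \<kappa>2 * r^2 * (if k = 1 then 1 / b r else 0) * (if l = 1 then 1 / b r else 0))" for k l
    unfolding ricci_U[OF assms] scalar_U[OF assms] Ttens_def Ktens_def ucov_def chicov_def sss_diag r_def t_def
    by simp
  have e0: "?E 0 0 \<longleftrightarrow> Acond b q \<kappa>1 \<kappa>2 r"
    unfolding E Acond_def
    by (rule eq_scaled[where c="- ((b r)^2 / r^2)"]) (use nz in \<open>simp_all add: Rx_def Sx_def Gd_def field_simps eval_nat_numeral\<close>)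
  have e1: "?E 1 1 \<longleftrightarrow> Acond b q \<kappa>1 \<kappa>2 r"
    unfolding E Acond_def
    by (rule eq_scaled[where c="1 / ((b r)^2 * r^2)"]) (use nz in \<open>simp_all add: Rx_def Sx_def Gd_def field_simps eval_nat_numeral\<close>)
  have e2: "?E 2 2 \<longleftrightarrow> Bcond b q \<kappa>1 \<kappa>2 r"
    unfolding E Bcond_def
    by (rule eq_scaled[where c="r / 2"]) (use nz in \<open>simp_all add: Rx_def Sx_def Gd_def field_simps eval_nat_numeral\<close>)
  have e3: "?E 3 3 \<longleftrightarrow> Bcond b q \<kappa>1 \<kappa>2 r"
    unfolding E Bcond_def
    by (rule eq_scaled[where c="r * (sin t)^2 / 2"]) (use nz in \<open>simp_all add: Rx_def Sx_def Gd_def field_simps eval_nat_numeral\<close>)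
  have off: "?E k l" if "k \<noteq> l" for k l
    unfolding E using that by (auto simp add: Rx_def)
  show ?thesis
  proof
    assume "\<forall>k l. ?E k l"
    then show "Acond b q \<kappa>1 \<kappa>2 (x$1) \<and> Bcond b q \<kappa>1 \<kappa>2 (x$1)"
      using e0 e2 r_def by blast
  next
    assume AB: "Acond b q \<kappa>1 \<kappa>2 (x$1) \<and> Bcond b q \<kappa>1 \<kappa>2 (x$1)"
    show "\<forall>k l. ?E k l"
    proof (intro allI)
      fix k l :: 4
      show "?E k l"
      proof (cases "k = l")
        case True
        have "(4::4) = 0" by simp
        then show ?thesis using True exhaust_4[of k] e0 e1 e2 e3 AB r_def by metis
      qed (rule off)
    qed
  qed
qed

end



context bsetup begin

lemma ode_iff:
  assumes I_int: "is_interval I" and I_ne: "I \<noteq> {}"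
  shows "(\<forall>r\<in>I. Acond b q \<kappa>1 \<kappa>2 r \<and> Bcond b q \<kappa>1 \<kappa>2 r) \<longleftrightarrow>
     (\<exists>M::real. \<forall>r\<in>I. (b r)\<^sup>2 = 1 - 2 * M / r - (-\<kappa>1) / 3 * r\<^sup>2 + q\<^sup>2 / r\<^sup>2 - (-\<kappa>2) / 5 * r ^ 4)"
proof
  assume H: "\<forall>r\<in>I. Acond b q \<kappa>1 \<kappa>2 r \<and> Bcond b q \<kappa>1 \<kappa>2 r"
  define h where "h r = r * (b r)^2 - r - q^2 / r - \<kappa>1 * r^3 / 3 - \<kappa>2 * r^5 / 5" for r
  have hd: "(h has_real_derivative 0) (at r within I)" if r: "r \<in> I" for r
  proof -
    have A: "2 * r * b r * deriv b r + (b r)^2 - 1 = - (q^2 / r^2) + \<kappa>1 * r^2 + \<kappa>2 * r^4"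
      using H r by (auto simp: Acond_def)
    have rnz: "r \<noteq> 0" using Ipos[OF r] by simp
    have "(h has_real_derivative ((b r)^2 + r*(2*b r*deriv b r) - 1 + q^2/r^2 - \<kappa>1*r^2 - \<kappa>2*r^4)) (at r)"
      unfolding h_def
      using rnz by (auto intro!: derivative_eq_intros d1[OF r] simp: field_simps eval_nat_numeral)
    moreover have "(b r)^2 + r*(2*b r*deriv b r) - 1 + q^2/r^2 - \<kappa>1*r^2 - \<kappa>2*r^4 = 0"
      using A by (simp add: algebra_simps)
    ultimately have "(h has_real_derivative 0) (at r)" by simp
    then show ?thesis by (rule has_field_derivative_at_within)
  qed
  obtain c where c: "\<forall>r\<in>I. h r = c"
    using has_field_derivative_zero_constant[OF is_interval_convex[OF I_int] hd] by blast
  show "\<exists>M::real. \<forall>r\<in>I. (b r)\<^sup>2 = 1 - 2 * M / r - (-\<kappa>1) / 3 * r\<^sup>2 + q\<^sup>2 / r\<^sup>2 - (-\<kappa>2) / 5 * r ^ 4"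
  proof (intro exI ballI)
    fix r assume r: "r \<in> I"
    have rnz: "r \<noteq> 0" using Ipos[OF r] by simp
    have "h r = c" using c r by blast
    then show "(b r)\<^sup>2 = 1 - 2 * (- c / 2) / r - (-\<kappa>1) / 3 * r\<^sup>2 + q\<^sup>2 / r\<^sup>2 - (-\<kappa>2) / 5 * r ^ 4"
      unfolding h_def using rnz by (simp add: field_simps eval_nat_numeral)
  qed
next
  assume "\<exists>M::real. \<forall>r\<in>I. (b r)\<^sup>2 = 1 - 2 * M / r - (-\<kappa>1) / 3 * r\<^sup>2 + q\<^sup>2 / r\<^sup>2 - (-\<kappa>2) / 5 * r ^ 4"
  then obtain M where M: "\<And>r. r \<in> I \<Longrightarrow> (b r)\<^sup>2 = 1 - 2 * M / r - (-\<kappa>1) / 3 * r\<^sup>2 + q\<^sup>2 / r\<^sup>2 - (-\<kappa>2) / 5 * r ^ 4"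
    by blast
  define P where "P r = 1 - 2 * M / r - (-\<kappa>1) / 3 * r\<^sup>2 + q\<^sup>2 / r\<^sup>2 - (-\<kappa>2) / 5 * r ^ 4" for r
  define P1 where "P1 r = 2 * M / r^2 + 2 * \<kappa>1 / 3 * r - 2 * q^2 / r^3 + 4 * \<kappa>2 / 5 * r^3" for r
  define P2 where "P2 r = - 4 * M / r^3 + 2 * \<kappa>1 / 3 + 6 * q^2 / r^4 + 12 * \<kappa>2 / 5 * r^2" for r
  have ev: "\<forall>\<^sub>F s in nhds r. s \<in> I" if "r \<in> I" for r
    using I_open that by (rule eventually_nhds_in_open)
  have P1d: "(P has_real_derivative P1 r) (at r)" if "r \<noteq> 0" for r
    unfolding P_def P1_def
    using that by (auto intro!: derivative_eq_intros simp: field_simps eval_nat_numeral)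
  have P2d: "(P1 has_real_derivative P2 r) (at r)" if "r \<noteq> 0" for r
    unfolding P2_def P1_def
    using that by (auto intro!: derivative_eq_intros simp: field_simps eval_nat_numeral)
  have first: "2 * b r * deriv b r = P1 r" if r: "r \<in> I" for r
  proof -
    have rnz: "r \<noteq> 0" using Ipos[OF r] by simp
    have "((\<lambda>s. (b s)^2) has_real_derivative 2 * b r * deriv b r) (at r)"
      by (rule derivative_eq_intros d1[OF r] refl)+ simp
    moreover have "((\<lambda>s. (b s)^2) has_real_derivative P1 r) (at r)"
      using P1d[OF rnz]
      by (rule DERIV_cong_ev[THEN iffD2, rotated 3]) (use ev[OF r] in \<open>auto elim!: eventually_mono simp: M P_def\<close>)
    ultimately show ?thesis by (rule DERIV_unique)
  qed
  have second: "2 * (deriv b r)^2 + 2 * b r * deriv (deriv b) r = P2 r" if r: "r \<in> I" for r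
  proof -
    have rnz: "r \<noteq> 0" using Ipos[OF r] by simp
    have "((\<lambda>s. 2 * b s * deriv b s) has_real_derivative 2 * (deriv b r)^2 + 2 * b r * deriv (deriv b) r) (at r)"
      by (rule derivative_eq_intros d1[OF r] d2[OF r] refl)+ (simp add: power2_eq_square)
    moreover have "((\<lambda>s. 2 * b s * deriv b s) has_real_derivative P2 r) (at r)"
      using P2d[OF rnz]
      by (rule DERIV_cong_ev[THEN iffD2, rotated 3]) (use ev[OF r] in \<open>auto elim!: eventually_mono simp: first\<close>)
    ultimately show ?thesis by (rule DERIV_unique)
  qed
  show "\<forall>r\<in>I. Acond b q \<kappa>1 \<kappa>2 r \<and> Bcond b q \<kappa>1 \<kappa>2 r"
  proof
    fix r assume r: "r \<in> I"
    have rnz: "r \<noteq> 0" using Ipos[OF r] by simp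
    have f: "2 * b r * deriv b r = P1 r" and s: "2 * (deriv b r)^2 + 2 * b r * deriv (deriv b) r = P2 r"
      and m: "(b r)^2 = P r" using first[OF r] second[OF r] M[OF r] by (auto simp: P_def)
    have e1: "2 * r * b r * deriv b r = r * P1 r" using f by (simp add: algebra_simps)
    have A: "Acond b q \<kappa>1 \<kappa>2 r"
      unfolding Acond_def m e1 using rnz by (simp add: P_def P1_def field_simps eval_nat_numeral)
    have e2: "4 * b r * deriv b r = 2 * P1 r" using f by (simp add: algebra_simps)
    have B: "Bcond b q \<kappa>1 \<kappa>2 r"
      unfolding Bcond_def s e2 using rnz by (simp add: P2_def P1_def field_simps eval_nat_numeral)
    show "Acond b q \<kappa>1 \<kappa>2 r \<and> Bcond b q \<kappa>1 \<kappa>2 r" using A B by blast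
  qed
qed

end


theorem proposition14:
  fixes b :: "real \<Rightarrow> real" and I :: "real set"
    and \<kappa>1 \<kappa>2 q Lam lam :: real
  assumes I_open: "open I" and I_interval: "is_interval I" and I_ne: "I \<noteq> {}"
    and I_pos: "I \<subseteq> {0<..}"
    and b_smooth: "\<forall>n. \<forall>r\<in>I. ((deriv ^^ n) b) differentiable (at r)"
    and b_pos: "\<forall>r\<in>I. b r > 0"
    and Lam_def: "Lam = - \<kappa>1" and lam_def: "lam = - \<kappa>2"
  shows "(\<forall>x::real^4. x$1 \<in> I \<and> 0 < x$2 \<and> x$2 < pi \<longrightarrow>
            (\<forall>k l. ricci (sss_metric b) x k l
                     - 1/2 * scalar_curv (sss_metric b) x * sss_metric b x $ k $ l
                   = Ttens q b x k l + Ktens \<kappa>1 \<kappa>2 b x k l))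
     \<longleftrightarrow> (\<exists>M::real. \<forall>r\<in>I.
            (b r)\<^sup>2 = 1 - 2 * M / r - Lam / 3 * r\<^sup>2 + q\<^sup>2 / r\<^sup>2 - lam / 5 * r ^ 4)"
proof -
  interpret bsetup b I
  proof
    show "open I" using I_open .
  next
    fix r assume r: "r \<in> I"
    show "r > 0" using I_pos r by auto
    show "b r > 0" using b_pos r by auto
    show "(b has_real_derivative deriv b r) (at r)"
      using b_smooth r by (auto simp: DERIV_deriv_iff_real_differentiable dest: spec[of _ 0])
    show "(deriv b has_real_derivative deriv (deriv b) r) (at r)"
      using b_smooth r by (auto simp: DERIV_deriv_iff_real_differentiable dest: spec[of _ 1])
  qed
  have LHS: "(\<forall>x::real^4. x$1 \<in> I \<and> 0 < x$2 \<and> x$2 < pi \<longrightarrow>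
            (\<forall>k l. ricci (sss_metric b) x k l
                     - 1/2 * scalar_curv (sss_metric b) x * sss_metric b x $ k $ l
                   = Ttens q b x k l + Ktens \<kappa>1 \<kappa>2 b x k l))
     \<longleftrightarrow> (\<forall>r\<in>I. Acond b q \<kappa>1 \<kappa>2 r \<and> Bcond b q \<kappa>1 \<kappa>2 r)"
  proof
    assume H: "\<forall>x::real^4. x$1 \<in> I \<and> 0 < x$2 \<and> x$2 < pi \<longrightarrow>
            (\<forall>k l. ricci (sss_metric b) x k l
                     - 1/2 * scalar_curv (sss_metric b) x * sss_metric b x $ k $ l
                   = Ttens q b x k l + Ktens \<kappa>1 \<kappa>2 b x k l)"
    show "\<forall>r\<in>I. Acond b q \<kappa>1 \<kappa>2 r \<and> Bcond b q \<kappa>1 \<kappa>2 r"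
    proof
      fix r assume r: "r \<in> I"
      define x :: pt where "x = (\<chi> i. if i = 1 then r else if i = 2 then pi/2 else 0)"
      have x1: "x$1 = r" and x2: "x$2 = pi/2" by (simp_all add: x_def)
      have xU: "x \<in> UU I" using r by (simp add: UU_def x1 x2)
      show "Acond b q \<kappa>1 \<kappa>2 r \<and> Bcond b q \<kappa>1 \<kappa>2 r"
        using H[rule_format, of x] einstein_U[OF xU, of q \<kappa>1 \<kappa>2] r x1 x2 by simp
    qed
  next
    assume H: "\<forall>r\<in>I. Acond b q \<kappa>1 \<kappa>2 r \<and> Bcond b q \<kappa>1 \<kappa>2 r"
    show "\<forall>x::real^4. x$1 \<in> I \<and> 0 < x$2 \<and> x$2 < pi \<longrightarrow>
            (\<forall>k l. ricci (sss_metric b) x k l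
                     - 1/2 * scalar_curv (sss_metric b) x * sss_metric b x $ k $ l
                   = Ttens q b x k l + Ktens \<kappa>1 \<kappa>2 b x k l)"
    proof (rule allI, rule impI)
      fix x :: pt assume "x$1 \<in> I \<and> 0 < x$2 \<and> x$2 < pi"
      then have xU: "x \<in> UU I" by (simp add: UU_def)
      then have "x$1 \<in> I" by (simp add: UU_def)
      then show "\<forall>k l. ricci (sss_metric b) x k l
                     - 1/2 * scalar_curv (sss_metric b) x * sss_metric b x $ k $ l
                   = Ttens q b x k l + Ktens \<kappa>1 \<kappa>2 b x k l"
        using einstein_U[OF xU, of q \<kappa>1 \<kappa>2] H by blast
    qed
  qed
  show ?thesis unfolding LHS Lam_def lam_def by (rule ode_iff[OF I_interval I_ne])
qed

end
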